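(* Let $\beta>0$ and let $(\mu_n)_n$ be a sequence of positive real numbers with $\lim_{n\to\infty}\frac{\mu_n}{n}=c$ for some constant $c$; put $\alpha_n=\frac{\mu_n}{n}$. Then (1) the probability measures $\nu_{\beta,\alpha_n}$ converge weakly to $\nu_{\beta,c}$; (2) $\lim_{n\to\infty}E^*_{\beta,\alpha_n}=E^*_{\beta,c}$.
   Context: For $\delta\ge0$: $Q_\delta(t)=t^2+2\delta\log\frac1{|t|}$; for a probability measure $\nu$ on $\mathbb{R}$, $E_{\beta,\delta}(\nu)=\frac{\beta}{2}\int_{\mathbb{R}^2}\log\frac{1}{|s-t|}\,\nu(ds)\nu(dt)+\int_{\mathbb{R}}Q_\delta(t)\,\nu(dt)$, and $E^*_{\beta,\delta}$ is the infimum of $E_{\beta,\delta}$ over all Borel probability measures on $\mathbb{R}$. Put $a_\delta=\sqrt{\tfrac{\beta}{2}}\sqrt{1+\tfrac{2\delta}{\beta}-\sqrt{1+\tfrac{4\delta}{\beta}}}$, $b_\delta=\sqrt{\tfrac{\beta}{2}}\sqrt{1+\tfrac{2\delta}{\beta}+\sqrt{1+\tfrac{4\delta}{\beta}}}$, $S_\delta=[-b_\delta,-a_\delta]\cup[a_\delta,b_\delta]$, and let $\nu_{\beta,\delta}$ be the probability measure with density $\frac{2}{\pi\beta}\frac{1}{|t|}\sqrt{(t^2-a_\delta^2)(b_\delta^2-t^2)}$ on $S_\delta$ and $0$ off $S_\delta$ (this is the minimizer of $E_{\beta,\delta}$). Weak convergence means convergence of integrals of every bounded continuous function. *)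

theory Defs
  imports "HOL-Probability.Probability"
begin

definition Qfield :: "real \<Rightarrow> real \<Rightarrow> ereal" where
  "Qfield \<delta> t = (if t = 0 then (if \<delta> = 0 then 0 else \<infinity>)
                   else ereal (t\<^sup>2 + 2 * \<delta> * ln (1 / \<bar>t\<bar>)))"

definition logker :: "real \<Rightarrow> real \<Rightarrow> ereal" where
  "logker s t = (if s = t then \<infinity> else ereal (ln (1 / \<bar>s - t\<bar>)))"

definition energy_kernel :: "real \<Rightarrow> real \<Rightarrow> real \<times> real \<Rightarrow> ereal" where
  "energy_kernel \<beta> \<delta> p = ereal (\<beta> / 2) * logker (fst p) (snd p)
      + ereal (1/2) * Qfield \<delta> (fst p) + ereal (1/2) * Qfield \<delta> (snd p)"

text \<open>E_{beta,delta}(nu) = (beta/2) iint log(1/|s-t|) + int Q_delta, computed as the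
  integral of the combined kernel over nu x nu (positive part minus negative part).\<close>
definition energy :: "real \<Rightarrow> real \<Rightarrow> real measure \<Rightarrow> ereal" where
  "energy \<beta> \<delta> \<nu> =
     enn2ereal (\<integral>\<^sup>+ p. e2ennreal (energy_kernel \<beta> \<delta> p) \<partial>(\<nu> \<Otimes>\<^sub>M \<nu>))
   - enn2ereal (\<integral>\<^sup>+ p. e2ennreal (- energy_kernel \<beta> \<delta> p) \<partial>(\<nu> \<Otimes>\<^sub>M \<nu>))"

definition prob_measures_R :: "real measure set" where
  "prob_measures_R = {M. prob_space M \<and> sets M = sets borel}"

definition energy_inf :: "real \<Rightarrow> real \<Rightarrow> ereal" where
  "energy_inf \<beta> \<delta> = (INF M \<in> prob_measures_R. energy \<beta> \<delta> M)"

definition a_edge :: "real \<Rightarrow> real \<Rightarrow> real" where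
  "a_edge \<beta> \<delta> = sqrt (\<beta>/2) * sqrt (1 + 2*\<delta>/\<beta> - sqrt (1 + 4*\<delta>/\<beta>))"

definition b_edge :: "real \<Rightarrow> real \<Rightarrow> real" where
  "b_edge \<beta> \<delta> = sqrt (\<beta>/2) * sqrt (1 + 2*\<delta>/\<beta> + sqrt (1 + 4*\<delta>/\<beta>))"

definition supp_S :: "real \<Rightarrow> real \<Rightarrow> real set" where
  "supp_S \<beta> \<delta> = {- b_edge \<beta> \<delta> .. - a_edge \<beta> \<delta>} \<union> {a_edge \<beta> \<delta> .. b_edge \<beta> \<delta>}"

definition eq_density :: "real \<Rightarrow> real \<Rightarrow> real \<Rightarrow> real" where
  "eq_density \<beta> \<delta> t = (if t \<in> supp_S \<beta> \<delta> then
      2 / (pi * \<beta>) * (1 / \<bar>t\<bar>)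
        * sqrt ((t\<^sup>2 - (a_edge \<beta> \<delta>)\<^sup>2) * ((b_edge \<beta> \<delta>)\<^sup>2 - t\<^sup>2))
    else 0)"

definition nu_eq :: "real \<Rightarrow> real \<Rightarrow> real measure" where
  "nu_eq \<beta> \<delta> = density lborel (\<lambda>t. ennreal (eq_density \<beta> \<delta> t))"

definition weak_conv_bc :: "(nat \<Rightarrow> real measure) \<Rightarrow> real measure \<Rightarrow> bool" where
  "weak_conv_bc Ms M \<longleftrightarrow>
     (\<forall>f :: real \<Rightarrow> real. continuous_on UNIV f \<and> bounded (range f) \<longrightarrow>
        (\<lambda>n. integral\<^sup>L (Ms n) f) \<longlonglongrightarrow> integral\<^sup>L M f)"

end

theory Submission
  imports Defs
begin

lemma ln_le_sq: "(y::real) > 0 \<Longrightarrow> e > 0 \<Longrightarrow> ln y \<le> e/2 * y^2 - ln e / 2"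
proof -
  assume y: "y > 0" and e: "e > 0"
  have "ln (e * y^2) \<le> e*y^2 - 1" using y e by (intro ln_le_minus_one) auto
  moreover have "ln (e * y^2) = ln e + 2 * ln y" using y e by (simp add: ln_mult ln_realpow)
  ultimately show ?thesis by simp
qed

definition qv :: "real \<Rightarrow> real \<Rightarrow> real" where
  "qv \<delta> s = s^2 + 2*\<delta>*ln (1/\<bar>s\<bar>)"

lemma Qfield_cases: "Qfield \<delta> s = (if s = 0 \<and> \<delta> \<noteq> 0 then \<infinity> else ereal (qv \<delta> s))"
  by (simp add: Qfield_def qv_def)

lemma qv_lower:
  assumes "0 \<le> \<delta>" "\<delta> \<le> D"
  shows "qv \<delta> s / 2 \<ge> s^2/4 - D * ln (2*(D+1)) / 2"
proof (cases "s = 0")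
  case True
  have "0 \<le> D * ln (2*(D+1))" using assms by (intro mult_nonneg_nonneg) auto
  then show ?thesis using True by (simp add: qv_def)
next
  case False
  define e where "e = 1/(2*(D+1))"
  have e: "e > 0" using assms by (simp add: e_def)
  have l: "ln \<bar>s\<bar> \<le> e/2 * \<bar>s\<bar>^2 - ln e / 2" using ln_le_sq[OF _ e, of "\<bar>s\<bar>"] False by simp
  have le: "ln e = - ln (2*(D+1))" using assms by (simp add: e_def ln_div)
  have lpos: "ln (2*(D+1)) \<ge> 0" using assms by simp
  have "qv \<delta> s = s^2 - 2*\<delta>*ln \<bar>s\<bar>" using False by (simp add: qv_def ln_div)
  also have "\<dots> \<ge> s^2 - 2*\<delta>*(e/2 * s^2 + ln (2*(D+1)) / 2)"
    using l le assms by (intro diff_left_mono mult_left_mono) auto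
  finally have A: "qv \<delta> s \<ge> s^2 - (\<delta>*e)*(s^2) - \<delta>*ln (2*(D+1))" by (simp add: algebra_simps)
  have "\<delta>*e \<le> 1/2" using assms by (simp add: e_def field_simps)
  hence "(\<delta>*e)*(s^2) \<le> s^2/2" by (metis mult_right_mono zero_le_power2 mult.commute times_divide_eq_right mult_1 )
  moreover have "\<delta>*ln (2*(D+1)) \<le> D * ln (2*(D+1))" using assms lpos by (intro mult_right_mono) auto
  ultimately show ?thesis using A by linarith
qed

lemma log_lower:
  assumes "(\<beta>::real) > 0" "s \<noteq> t"
  shows "\<beta>/2 * ln (1/\<bar>s - t\<bar>) \<ge> \<beta>/4 * ln (1/(2*\<beta>)) - s^2/4 - t^2/4"
proof -
  define e where "e = 1/(2*\<beta>)"
  have e: "e > 0" using assms by (simp add: e_def)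
  have l: "ln \<bar>s-t\<bar> \<le> e/2 * \<bar>s-t\<bar>^2 - ln e / 2" using ln_le_sq[OF _ e, of "\<bar>s-t\<bar>"] assms by simp
  have "0 \<le> (s+t)^2" by simp
  hence sq: "\<bar>s-t\<bar>^2 \<le> 2*(s^2) + 2*(t^2)" by (simp add: power2_eq_square algebra_simps)
  have "\<beta>/2 * ln (1/\<bar>s - t\<bar>) = - (\<beta>/2) * ln \<bar>s-t\<bar>" using assms by (simp add: ln_div)
  also have "\<dots> \<ge> - (\<beta>/2) * (e/2 * \<bar>s-t\<bar>^2 - ln e / 2)"
    using l assms by (intro mult_left_mono_neg) auto
  finally have A: "\<beta>/2 * ln (1/\<bar>s - t\<bar>) \<ge> \<beta>/4 * ln e - (\<beta>*e/4) * \<bar>s-t\<bar>^2" by (simp add: algebra_simps)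
  have be: "\<beta>*e/4 = 1/8" using assms by (simp add: e_def)
  have B: "(\<beta>*e/4) * \<bar>s-t\<bar>^2 \<le> s^2/4 + t^2/4" 
  proof -
    have "(\<beta>*e/4) * \<bar>s-t\<bar>^2 = \<bar>s-t\<bar>^2 / 8" by (simp add: be)
    thus ?thesis using sq by linarith
  qed
  show ?thesis using A B unfolding e_def by linarith
qed

definition Cb :: "real \<Rightarrow> real \<Rightarrow> real" where
  "Cb \<beta> D = \<bar>\<beta>/4 * ln (1/(2*\<beta>))\<bar> + D * ln (2*(D+1))"

lemma Cb_nonneg: "D \<ge> 0 \<Longrightarrow> Cb \<beta> D \<ge> 0"
  unfolding Cb_def by (intro add_nonneg_nonneg mult_nonneg_nonneg) auto

lemma kernel_real:
  assumes "s \<noteq> t" "\<not> (s = 0 \<and> \<delta> \<noteq> 0)" "\<not> (t = 0 \<and> \<delta> \<noteq> 0)"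
  shows "energy_kernel \<beta> \<delta> (s,t) = ereal (\<beta>/2 * ln (1/\<bar>s - t\<bar>) + qv \<delta> s / 2 + qv \<delta> t / 2)"
  using assms by (simp add: energy_kernel_def logker_def Qfield_cases)

lemma kernel_inf:
  assumes "\<beta> > 0" "s = t \<or> (s = 0 \<and> \<delta> \<noteq> 0) \<or> (t = 0 \<and> \<delta> \<noteq> 0)"
  shows "energy_kernel \<beta> \<delta> (s,t) = \<infinity>"
  using assms by (auto simp add: energy_kernel_def logker_def Qfield_cases)

lemma kernel_lower:
  assumes "\<beta> > 0" "0 \<le> \<delta>" "\<delta> \<le> D"
  shows "energy_kernel \<beta> \<delta> p \<ge> - ereal (Cb \<beta> D)"
proof -
  obtain s t where p: "p = (s,t)" by force
  show ?thesis
  proof (cases "s = t \<or> (s = 0 \<and> \<delta> \<noteq> 0) \<or> (t = 0 \<and> \<delta> \<noteq> 0)")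
    case True thus ?thesis using kernel_inf[OF assms(1) True] p by simp
  next
    case False
    have st: "s \<noteq> t" using False by auto
    have "\<beta>/2 * ln (1/\<bar>s - t\<bar>) + qv \<delta> s / 2 + qv \<delta> t / 2 + Cb \<beta> D \<ge> 0"
      using log_lower[OF assms(1) st] abs_ge_minus_self[of "\<beta>/4 * ln (1/(2*\<beta>))"] qv_lower[OF assms(2,3), of s] qv_lower[OF assms(2,3), of t] False
      unfolding Cb_def by linarith
    thus ?thesis using kernel_real[of s t \<delta> \<beta>] False p by (simp add: minus_le_iff) 
  qed
qed

lemma kernel_meas: "energy_kernel \<beta> \<delta> \<in> borel_measurable (borel \<Otimes>\<^sub>M borel)"
  unfolding energy_kernel_def logker_def Qfield_def by measurable

lemma shift_general:
  fixes f :: "'a \<Rightarrow> ereal"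
  assumes "prob_space M" and f[measurable]: "f \<in> borel_measurable M" and lb: "\<And>x. f x \<ge> - ereal C" and "C \<ge> 0"
  shows "enn2ereal (\<integral>\<^sup>+x. e2ennreal (f x) \<partial>M) - enn2ereal (\<integral>\<^sup>+x. e2ennreal (- f x) \<partial>M)
       = enn2ereal (\<integral>\<^sup>+x. e2ennreal (f x + ereal C) \<partial>M) - ereal C"
proof -
  interpret prob_space M by fact
  have pw: "e2ennreal (f x + ereal C) + e2ennreal (- f x) = e2ennreal (f x) + ennreal C" for x
  proof (cases "f x")
    case (real r)
    have r: "r \<ge> -C" using lb[of x] real by simp
    show ?thesis
    proof (cases "r \<ge> 0")
      case True
      then show ?thesis using real \<open>C \<ge> 0\<close> by (simp add: ennreal_plus ennreal_neg)
    next
      case False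
      then have "ennreal (r + C) + ennreal (- r) = ennreal C" using r by (subst ennreal_plus[symmetric]) auto
      then show ?thesis using real False by (simp add: ennreal_neg)
    qed
  next
    case PInf then show ?thesis by simp
  next
    case MInf then show ?thesis using lb[of x] by simp
  qed
  define S where "S = (\<integral>\<^sup>+x. e2ennreal (f x + ereal C) \<partial>M)"
  define P where "P = (\<integral>\<^sup>+x. e2ennreal (f x) \<partial>M)"
  define N where "N = (\<integral>\<^sup>+x. e2ennreal (- f x) \<partial>M)"
  have "S + N = (\<integral>\<^sup>+x. e2ennreal (f x + ereal C) + e2ennreal (- f x) \<partial>M)"
    unfolding S_def N_def by (rule nn_integral_add[symmetric]) auto
  also have "\<dots> = (\<integral>\<^sup>+x. e2ennreal (f x) + ennreal C \<partial>M)" using pw by simp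
  also have "\<dots> = P + ennreal C" unfolding P_def by (subst nn_integral_add) (auto simp: emeasure_space_1)
  finally have SN: "S + N = P + ennreal C" .
  have "N \<le> (\<integral>\<^sup>+x. ennreal C \<partial>M)" unfolding N_def
  proof (rule nn_integral_mono)
    fix x have "- f x \<le> ereal C" using lb[of x] by (simp add: ereal_uminus_le_reorder)
    then show "e2ennreal (- f x) \<le> ennreal C" using e2ennreal_mono by fastforce
  qed
  also have "\<dots> = ennreal C" by (simp add: emeasure_space_1)
  finally have Nle: "N \<le> ennreal C" .
  have Nt: "N \<noteq> top"
  proof
    assume "N = top"
    with Nle have "ennreal C = top" by (simp add: top_unique)
    then show False by simp
  qed
  define n where "n = enn2real N"
  have n: "enn2ereal N = ereal n" "n \<ge> 0"
  proof -
    have "ennreal n = N" unfolding n_def using Nt by (simp add: ennreal_enn2real top.not_eq_extremum)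
    moreover have "n \<ge> 0" unfolding n_def by simp
    ultimately show "enn2ereal N = ereal n" "n \<ge> 0" by auto
  qed
  have "enn2ereal S + ereal n = enn2ereal P + ereal C"
    using arg_cong[OF SN, of enn2ereal] n \<open>C \<ge> 0\<close> by (simp add: plus_ennreal.rep_eq)
  then show ?thesis unfolding S_def[symmetric] P_def[symmetric] N_def[symmetric] n
    by (cases "enn2ereal S"; cases "enn2ereal P") auto
qed

definition Gf :: "real \<Rightarrow> real \<Rightarrow> real \<Rightarrow> real measure \<Rightarrow> ennreal" where
  "Gf \<beta> \<delta> C \<nu> = (\<integral>\<^sup>+ p. e2ennreal (energy_kernel \<beta> \<delta> p + ereal C) \<partial>(\<nu> \<Otimes>\<^sub>M \<nu>))"

lemma kmeas:
  assumes "sets \<nu> = sets borel"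
  shows "energy_kernel \<beta> \<delta> \<in> borel_measurable (\<nu> \<Otimes>\<^sub>M \<nu>)"
  using kernel_meas measurable_cong_sets[OF sets_pair_measure_cong[OF assms assms] refl] by blast

lemma energy_shift:
  assumes "\<beta> > 0" "0 \<le> \<delta>" "\<delta> \<le> D" "\<nu> \<in> prob_measures_R"
  shows "energy \<beta> \<delta> \<nu> = enn2ereal (Gf \<beta> \<delta> (Cb \<beta> D) \<nu>) - ereal (Cb \<beta> D)"
proof -
  have ps: "prob_space \<nu>" "sets \<nu> = sets borel" using assms(4) by (auto simp: prob_measures_R_def)
  show ?thesis unfolding energy_def Gf_def
    by (rule shift_general[OF prob_space_pair[OF ps(1) ps(1)] kmeas[OF ps(2)] kernel_lower[OF assms(1-3)] Cb_nonneg])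
       (use assms in auto)
qed

lemma energy_lower:
  assumes "\<beta> > 0" "0 \<le> \<delta>" "\<nu> \<in> prob_measures_R"
  shows "energy \<beta> \<delta> \<nu> \<ge> - ereal (Cb \<beta> \<delta>)"
proof -
  have "0 \<le> enn2ereal (Gf \<beta> \<delta> (Cb \<beta> \<delta>) \<nu>)" by simp
  then show ?thesis using energy_shift[OF assms(1,2) order_refl assms(3)]
    by (cases "enn2ereal (Gf \<beta> \<delta> (Cb \<beta> \<delta>) \<nu>)") auto
qed

lemma energy_inf_lower:
  assumes "\<beta> > 0" "0 \<le> \<delta>"
  shows "energy_inf \<beta> \<delta> \<ge> - ereal (Cb \<beta> \<delta>)"
  unfolding energy_inf_def by (rule INF_greatest) (rule energy_lower[OF assms])

lemma Gmeas:
  assumes "sets \<nu> = sets borel"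
  shows "(\<lambda>p. e2ennreal (energy_kernel \<beta> \<delta> p + ereal C)) \<in> borel_measurable (\<nu> \<Otimes>\<^sub>M \<nu>)"
  using kmeas[OF assms, of \<beta> \<delta>] by measurable

lemma qv_half: "qv x s / 2 = s^2/2 + x * ln (1/\<bar>s\<bar>)"
  unfolding qv_def by (simp add: add_divide_distrib)

lemma conc_pw:
  assumes "\<beta> > 0" "0 \<le> a" "a \<le> D" "0 \<le> b" "b \<le> D" "0 \<le> l" "l \<le> 1" "\<delta> = l*a + (1-l)*b" "\<delta> > 0"
  shows "ennreal l * e2ennreal (energy_kernel \<beta> a p + ereal (Cb \<beta> D))
       + ennreal (1-l) * e2ennreal (energy_kernel \<beta> b p + ereal (Cb \<beta> D))
       \<le> e2ennreal (energy_kernel \<beta> \<delta> p + ereal (Cb \<beta> D))"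
proof -
  obtain s t where p: "p = (s,t)" by force
  show ?thesis
  proof (cases "s = t \<or> s = 0 \<or> t = 0")
    case True
    then have "s = t \<or> (s = 0 \<and> \<delta> \<noteq> 0) \<or> (t = 0 \<and> \<delta> \<noteq> 0)" using assms(9) by auto
    then have "energy_kernel \<beta> \<delta> p = \<infinity>" unfolding p by (rule kernel_inf[OF assms(1)])
    then show ?thesis by simp
  next
    case False
    define C where "C = Cb \<beta> D"
    define v0 where "v0 = \<beta>/2 * ln (1/\<bar>s - t\<bar>) + s^2/2 + t^2/2"
    define w where "w = ln (1/\<bar>s\<bar>) + ln (1/\<bar>t\<bar>)"
    define v where "v x = v0 + x * w" for x
    have st: "s \<noteq> t" "\<not> (s = 0 \<and> x \<noteq> 0)" "\<not> (t = 0 \<and> x \<noteq> 0)" for x using False by auto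
    have vx: "\<beta>/2 * ln (1/\<bar>s - t\<bar>) + qv x s / 2 + qv x t / 2 = v x" for x
      unfolding v_def v0_def w_def qv_half by (simp add: distrib_left)
    have K: "energy_kernel \<beta> x p = ereal (v x)" for x
      unfolding p vx[symmetric] by (rule kernel_real[OF st])
    have nn: "0 \<le> v x + C" if "0 \<le> x" "x \<le> D" for x
    proof -
      have "- ereal C \<le> ereal (v x)" using kernel_lower[OF assms(1) that, of p] unfolding K C_def .
      then show ?thesis by simp
    qed
    have eq: "v \<delta> + C = l * (v a + C) + (1-l) * (v b + C)"
      unfolding v_def assms(8) by (simp add: algebra_simps)
    have na: "0 \<le> v a + C" by (rule nn[OF assms(2,3)])
    have nb: "0 \<le> v b + C" by (rule nn[OF assms(4,5)])
    have l1: "0 \<le> 1 - l" using assms(7) by simp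
    have e1: "ennreal (l * (v a + C) + (1-l) * (v b + C)) = ennreal (l * (v a + C)) + ennreal ((1-l) * (v b + C))"
      by (rule ennreal_plus) (use na nb assms(6) l1 in auto)
    have e2: "ennreal (l * (v a + C)) = ennreal l * ennreal (v a + C)"
      by (rule ennreal_mult[OF assms(6) na])
    have e3: "ennreal ((1-l) * (v b + C)) = ennreal (1-l) * ennreal (v b + C)"
      by (rule ennreal_mult[OF l1 nb])
    have L: "e2ennreal (energy_kernel \<beta> y p + ereal (Cb \<beta> D)) = ennreal (v y + C)" for y
      unfolding K C_def by simp
    show ?thesis unfolding L eq e1 e2 e3 by (rule order_refl)
  qed
qed

lemma conc_G:
  assumes "\<beta> > 0" "0 \<le> a" "a \<le> D" "0 \<le> b" "b \<le> D" "0 \<le> l" "l \<le> 1" "\<delta> = l*a + (1-l)*b" "\<delta> > 0"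
    and "sets \<nu> = sets borel"
  shows "ennreal l * Gf \<beta> a (Cb \<beta> D) \<nu> + ennreal (1-l) * Gf \<beta> b (Cb \<beta> D) \<nu> \<le> Gf \<beta> \<delta> (Cb \<beta> D) \<nu>"
proof -
  have "ennreal l * Gf \<beta> a (Cb \<beta> D) \<nu> + ennreal (1-l) * Gf \<beta> b (Cb \<beta> D) \<nu>
     = (\<integral>\<^sup>+p. ennreal l * e2ennreal (energy_kernel \<beta> a p + ereal (Cb \<beta> D))
       + ennreal (1-l) * e2ennreal (energy_kernel \<beta> b p + ereal (Cb \<beta> D)) \<partial>(\<nu> \<Otimes>\<^sub>M \<nu>))"
    unfolding Gf_def using Gmeas[OF assms(10)]
    by (subst nn_integral_add) (auto simp: nn_integral_cmult)
  also have "\<dots> \<le> Gf \<beta> \<delta> (Cb \<beta> D) \<nu>" unfolding Gf_def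
    by (intro nn_integral_mono conc_pw[OF assms(1-9)])
  finally show ?thesis .
qed

lemma conc_inf:
  assumes "\<beta> > 0" "0 \<le> a" "a \<le> D" "0 \<le> b" "b \<le> D" "0 \<le> l" "l \<le> 1" "\<delta> = l*a + (1-l)*b" "\<delta> > 0"
    and "ereal x \<le> energy_inf \<beta> a" "ereal y \<le> energy_inf \<beta> b"
  shows "ereal (l*x + (1-l)*y) \<le> energy_inf \<beta> \<delta>"
  unfolding energy_inf_def
proof (rule INF_greatest)
  fix \<nu> assume \<nu>: "\<nu> \<in> prob_measures_R"
  have sets: "sets \<nu> = sets borel" using \<nu> by (simp add: prob_measures_R_def)
  have "l*a \<le> l*D" using assms by (intro mult_left_mono) auto
  moreover have "(1-l)*b \<le> (1-l)*D" using assms by (intro mult_left_mono) auto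
  moreover have "l*D + (1-l)*D = D" by (simp add: algebra_simps)
  ultimately have dD: "\<delta> \<le> D" using assms(8) by linarith
  define C where "C = Cb \<beta> D"
  define ga where "ga = enn2ereal (Gf \<beta> a C \<nu>)"
  define gb where "gb = enn2ereal (Gf \<beta> b C \<nu>)"
  define gd where "gd = enn2ereal (Gf \<beta> \<delta> C \<nu>)"
  have "ereal x \<le> energy \<beta> a \<nu>" using assms(10) \<nu> unfolding energy_inf_def by (meson INF_lower order_trans)
  then have xa: "ereal x \<le> ga - ereal C" unfolding ga_def C_def using energy_shift[OF assms(1,2,3) \<nu>] by simp
  have "ereal y \<le> energy \<beta> b \<nu>" using assms(11) \<nu> unfolding energy_inf_def by (meson INF_lower order_trans)
  then have yb: "ereal y \<le> gb - ereal C" unfolding gb_def C_def using energy_shift[OF assms(1,4,5) \<nu>] by simp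
  have xa': "ereal (x + C) \<le> ga" using xa by (cases ga) auto
  have yb': "ereal (y + C) \<le> gb" using yb by (cases gb) auto
  have "ennreal l * Gf \<beta> a C \<nu> + ennreal (1-l) * Gf \<beta> b C \<nu> \<le> Gf \<beta> \<delta> C \<nu>"
    unfolding C_def by (rule conc_G[OF assms(1-9) sets])
  then have "ereal l * ga + ereal (1-l) * gb \<le> gd"
    unfolding ga_def gb_def gd_def using assms(6,7)
    by (simp add: less_eq_ennreal.rep_eq plus_ennreal.rep_eq times_ennreal.rep_eq)
  moreover have "ereal l * ereal (x + C) \<le> ereal l * ga" using xa' assms(6) by (intro ereal_mult_left_mono) auto
  moreover have "ereal (1-l) * ereal (y + C) \<le> ereal (1-l) * gb" using yb' assms(7) by (intro ereal_mult_left_mono) auto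
  ultimately have "ereal l * ereal (x + C) + ereal (1-l) * ereal (y + C) \<le> gd"
    using add_mono order_trans by blast
  then have "ereal (l * (x + C) + (1-l) * (y + C)) \<le> gd" by simp
  then have "ereal (l*x + (1-l)*y + C) \<le> gd" by (simp add: algebra_simps)
  then have "ereal (l*x + (1-l)*y) \<le> gd - ereal C" by (cases gd) auto
  then show "ereal (l*x + (1-l)*y) \<le> energy \<beta> \<delta> \<nu>"
  proof -
    have d0: "0 \<le> \<delta>" using assms(9) by simp
    have E: "energy \<beta> \<delta> \<nu> = gd - ereal C" unfolding gd_def C_def by (rule energy_shift[OF assms(1) d0 dD \<nu>])
    show ?thesis by (subst E) (rule \<open>ereal (l*x + (1-l)*y) \<le> gd - ereal C\<close>)
  qed
qed

definition v0f :: "real \<Rightarrow> real \<Rightarrow> real \<Rightarrow> real" where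
  "v0f \<beta> s t = \<beta>/2 * ln (1/\<bar>s - t\<bar>) + s^2/2 + t^2/2"
definition wff :: "real \<Rightarrow> real \<Rightarrow> real" where
  "wff s t = ln (1/\<bar>s\<bar>) + ln (1/\<bar>t\<bar>)"

lemma kernel_lin:
  assumes "s \<noteq> t" "s \<noteq> 0" "t \<noteq> 0"
  shows "energy_kernel \<beta> z (s,t) = ereal (v0f \<beta> s t + z * wff s t)"
proof -
  have st: "s \<noteq> t" "\<not> (s = 0 \<and> z \<noteq> 0)" "\<not> (t = 0 \<and> z \<noteq> 0)" using assms by auto
  have vx: "\<beta>/2 * ln (1/\<bar>s - t\<bar>) + qv z s / 2 + qv z t / 2 = v0f \<beta> s t + z * wff s t"
    unfolding v0f_def wff_def qv_half by (simp add: distrib_left)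
  show ?thesis unfolding vx[symmetric] by (rule kernel_real[OF st])
qed

lemma ln_bound:
  assumes "(k::real) \<ge> 1" "1/k \<le> \<bar>x\<bar>" "\<bar>x\<bar> \<le> k"
  shows "\<bar>ln (1/\<bar>x\<bar>)\<bar> \<le> ln k"
proof -
  have k0: "k > 0" using assms by linarith
  have x0: "\<bar>x\<bar> > 0" using assms(2) k0 by (smt (verit) divide_pos_pos)
  have "ln \<bar>x\<bar> \<le> ln k" using assms(3) x0 by simp
  moreover have "ln (1/k) \<le> ln \<bar>x\<bar>" using assms(2) x0 k0 by (subst ln_le_cancel_iff) auto
  moreover have "ln (1/k) = - ln k" using k0 by (simp add: ln_div)
  moreover have "ln (1/\<bar>x\<bar>) = - ln \<bar>x\<bar>" using x0 by (simp add: ln_div)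
  ultimately show ?thesis by linarith
qed

lemma trunc_pw:
  assumes "\<beta> > 0" "0 \<le> c" "c \<le> D" "0 \<le> \<delta>" "\<delta> \<le> D" "k \<ge> 1"
    "1/k \<le> \<bar>x\<bar>" "\<bar>x\<bar> \<le> k" "1/k \<le> \<bar>y\<bar>" "\<bar>y\<bar> \<le> k"
  shows "e2ennreal (energy_kernel \<beta> \<delta> (x,y) + ereal (Cb \<beta> D))
     \<le> e2ennreal (energy_kernel \<beta> c (x,y) + ereal (Cb \<beta> D)) + ennreal (\<bar>\<delta>-c\<bar> * (2 * ln k))"
proof (cases "x = y")
  case True
  then have "energy_kernel \<beta> c (x,y) = \<infinity>" by (intro kernel_inf[OF assms(1)]) auto
  then show ?thesis by simp
next
  case False
  have k0: "k > 0" using assms by linarith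
  have x0: "x \<noteq> 0" using assms(7) k0 by (smt (verit) divide_pos_pos)
  have y0: "y \<noteq> 0" using assms(9) k0 by (smt (verit) divide_pos_pos)
  define C where "C = Cb \<beta> D"
  define B where "B = \<bar>\<delta>-c\<bar> * (2 * ln k)"
  have B0: "0 \<le> B" unfolding B_def using assms(6) by simp
  have Kz: "energy_kernel \<beta> z (x,y) = ereal (v0f \<beta> x y + z * wff x y)" for z by (rule kernel_lin[OF False x0 y0])
  have nn: "0 \<le> v0f \<beta> x y + c * wff x y + C"
  proof -
    have "- ereal C \<le> ereal (v0f \<beta> x y + c * wff x y)" using kernel_lower[OF assms(1-3), of "(x,y)"] unfolding Kz C_def .
    then show ?thesis by simp
  qed
  have w: "\<bar>wff x y\<bar> \<le> 2 * ln k" using ln_bound[OF assms(6-8)] ln_bound[OF assms(6) assms(9,10)]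
    unfolding wff_def by linarith
  have "(\<delta> - c) * wff x y \<le> \<bar>\<delta> - c\<bar> * \<bar>wff x y\<bar>" by (metis abs_ge_self abs_mult)
  also have "\<dots> \<le> B" unfolding B_def using w by (intro mult_left_mono) auto
  finally have "v0f \<beta> x y + \<delta> * wff x y + C \<le> (v0f \<beta> x y + c * wff x y + C) + B" by (simp add: algebra_simps)
  then have "ennreal (v0f \<beta> x y + \<delta> * wff x y + C) \<le> ennreal ((v0f \<beta> x y + c * wff x y + C) + B)"
    by (rule ennreal_leI)
  also have "\<dots> = ennreal (v0f \<beta> x y + c * wff x y + C) + ennreal B" by (rule ennreal_plus[OF nn B0])
  finally have F: "ennreal (v0f \<beta> x y + \<delta> * wff x y + C) \<le> ennreal (v0f \<beta> x y + c * wff x y + C) + ennreal B" .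
  have L: "e2ennreal (energy_kernel \<beta> z (x,y) + ereal C) = ennreal (v0f \<beta> x y + z * wff x y + C)" for z
    unfolding Kz by simp
  show ?thesis unfolding C_def[symmetric] B_def[symmetric] L by (rule F)
qed

lemma Abor: "{x::real. 1/k \<le> \<bar>x\<bar> \<and> \<bar>x\<bar> \<le> k} \<in> sets borel"
  by measurable

lemma trunc:
  assumes b: "\<beta> > 0" and cD: "0 \<le> c" "c \<le> D" and dD: "0 \<le> \<delta>" "\<delta> \<le> D" and \<nu>: "\<nu> \<in> prob_measures_R"
    and k: "k \<ge> 1" and m: "measure \<nu> {x. 1/k \<le> \<bar>x\<bar> \<and> \<bar>x\<bar> \<le> k} = m" "m > 0"
  shows "energy_inf \<beta> \<delta> \<le> enn2ereal (Gf \<beta> c (Cb \<beta> D) \<nu> * ennreal (1/m^2) + ennreal (\<bar>\<delta>-c\<bar> * (2*ln k))) - ereal (Cb \<beta> D)"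
proof -
  define A where "A = {x::real. 1/k \<le> \<bar>x\<bar> \<and> \<bar>x\<bar> \<le> k}"
  define C where "C = Cb \<beta> D"
  define B where "B = \<bar>\<delta>-c\<bar> * (2 * ln k)"
  have ps: "prob_space \<nu>" and sets: "sets \<nu> = sets borel" using \<nu> by (auto simp: prob_measures_R_def)
  interpret prob_space \<nu> by fact
  have Asets: "A \<in> sets \<nu>" unfolding sets A_def by (rule Abor)
  define w where "w x = ennreal (1/m) * indicator A x" for x
  have wb: "w \<in> borel_measurable borel" unfolding w_def using Abor[of k] unfolding A_def[symmetric]
    by measurable
  have wm: "w \<in> borel_measurable \<nu>" using wb measurable_cong_sets[OF sets refl] by blast
  define \<nu>' where "\<nu>' = density \<nu> w"
  have sets': "sets \<nu>' = sets borel" unfolding \<nu>'_def using sets by simp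
  have "emeasure \<nu>' (space \<nu>') = (\<integral>\<^sup>+x. w x * indicator (space \<nu>) x \<partial>\<nu>)"
    unfolding \<nu>'_def by (simp add: emeasure_density[OF wm])
  also have "\<dots> = (\<integral>\<^sup>+x. ennreal (1/m) * indicator A x \<partial>\<nu>)"
    unfolding w_def by (intro nn_integral_cong) (auto simp: indicator_def)
  also have "\<dots> = ennreal (1/m) * emeasure \<nu> A" by (rule nn_integral_cmult_indicator[OF Asets])
  also have "\<dots> = ennreal (1/m) * ennreal m" using m unfolding A_def by (simp add: emeasure_eq_measure)
  also have "\<dots> = 1" using m by (simp add: ennreal_mult[symmetric])
  finally have ps': "prob_space \<nu>'" by (rule prob_spaceI)
  have \<nu>'R: "\<nu>' \<in> prob_measures_R" using ps' sets' by (simp add: prob_measures_R_def)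
  have pd: "\<nu>' \<Otimes>\<^sub>M \<nu>' = density (\<nu> \<Otimes>\<^sub>M \<nu>) (\<lambda>(x,y). w x * w y)"
    unfolding \<nu>'_def
    by (rule pair_measure_density[OF wm wm prob_space_imp_sigma_finite[OF ps]])
       (rule prob_space_imp_sigma_finite[OF ps'[unfolded \<nu>'_def]])
  have wwm: "(\<lambda>(x,y). w x * w y) \<in> borel_measurable (\<nu> \<Otimes>\<^sub>M \<nu>)" using wm by measurable
  have gm: "(\<lambda>p. e2ennreal (energy_kernel \<beta> z p + ereal C)) \<in> borel_measurable (\<nu> \<Otimes>\<^sub>M \<nu>)" for z
    by (rule Gmeas[OF sets])
  have "Gf \<beta> \<delta> C \<nu>' = (\<integral>\<^sup>+p. (\<lambda>(x,y). w x * w y) p * e2ennreal (energy_kernel \<beta> \<delta> p + ereal C) \<partial>(\<nu> \<Otimes>\<^sub>M \<nu>))"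
    unfolding Gf_def pd by (rule nn_integral_density[OF wwm gm])
  also have "\<dots> \<le> (\<integral>\<^sup>+p. ennreal (1/m^2) * e2ennreal (energy_kernel \<beta> c p + ereal C)
                     + (\<lambda>(x,y). w x * w y) p * ennreal B \<partial>(\<nu> \<Otimes>\<^sub>M \<nu>))"
  proof (rule nn_integral_mono)
    fix p :: "real \<times> real"
    obtain x y where p: "p = (x,y)" by force
    show "(\<lambda>(x,y). w x * w y) p * e2ennreal (energy_kernel \<beta> \<delta> p + ereal C)
       \<le> ennreal (1/m^2) * e2ennreal (energy_kernel \<beta> c p + ereal C) + (\<lambda>(x,y). w x * w y) p * ennreal B"
    proof (cases "x \<in> A \<and> y \<in> A")
      case True
      have ww: "w x * w y = ennreal (1/m^2)" using True m unfolding w_def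
        by (simp add: ennreal_mult[symmetric] power2_eq_square)
      have "e2ennreal (energy_kernel \<beta> \<delta> (x,y) + ereal C) \<le> e2ennreal (energy_kernel \<beta> c (x,y) + ereal C) + ennreal B"
        unfolding C_def B_def using True unfolding A_def by (intro trunc_pw[OF b cD dD k]) auto
      then have "ennreal (1/m^2) * e2ennreal (energy_kernel \<beta> \<delta> (x,y) + ereal C)
          \<le> ennreal (1/m^2) * (e2ennreal (energy_kernel \<beta> c (x,y) + ereal C) + ennreal B)"
        by (rule mult_left_mono) simp
      then show ?thesis unfolding p using ww by (simp add: distrib_left)
    next
      case False
      then have "w x = 0 \<or> w y = 0" unfolding w_def by auto
      then show ?thesis unfolding p by auto
    qed
  qed
  also have "\<dots> = ennreal (1/m^2) * Gf \<beta> c C \<nu> + ennreal B * (\<integral>\<^sup>+p. (\<lambda>(x,y). w x * w y) p \<partial>(\<nu> \<Otimes>\<^sub>M \<nu>))"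
    unfolding Gf_def using gm wwm
    by (subst nn_integral_add) (auto simp: nn_integral_cmult mult.commute[of _ "ennreal B"])
  also have "(\<integral>\<^sup>+p. (\<lambda>(x,y). w x * w y) p \<partial>(\<nu> \<Otimes>\<^sub>M \<nu>)) = 1"
  proof -
    interpret P: prob_space "\<nu>' \<Otimes>\<^sub>M \<nu>'" by (rule prob_space_pair[OF ps' ps'])
    have "1 = emeasure (\<nu>' \<Otimes>\<^sub>M \<nu>') (space (\<nu>' \<Otimes>\<^sub>M \<nu>'))" by (simp add: P.emeasure_space_1)
    also have "\<dots> = (\<integral>\<^sup>+p. (\<lambda>(x,y). w x * w y) p * indicator (space (\<nu> \<Otimes>\<^sub>M \<nu>)) p \<partial>(\<nu> \<Otimes>\<^sub>M \<nu>))"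
      unfolding pd by (simp add: emeasure_density[OF wwm])
    also have "\<dots> = (\<integral>\<^sup>+p. (\<lambda>(x,y). w x * w y) p \<partial>(\<nu> \<Otimes>\<^sub>M \<nu>))"
      by (intro nn_integral_cong) simp
    finally show ?thesis by simp
  qed
  finally have G: "Gf \<beta> \<delta> C \<nu>' \<le> Gf \<beta> c C \<nu> * ennreal (1/m^2) + ennreal B" by (simp add: mult.commute)
  have "energy_inf \<beta> \<delta> \<le> energy \<beta> \<delta> \<nu>'" unfolding energy_inf_def by (rule INF_lower[OF \<nu>'R])
  also have "\<dots> = enn2ereal (Gf \<beta> \<delta> C \<nu>') - ereal C" unfolding C_def by (rule energy_shift[OF b dD \<nu>'R])
  also have "\<dots> \<le> enn2ereal (Gf \<beta> c C \<nu> * ennreal (1/m^2) + ennreal B) - ereal C"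
    by (rule ereal_minus_mono) (use G in \<open>simp_all add: less_eq_ennreal.rep_eq\<close>)
  finally show ?thesis unfolding C_def B_def .
qed

lemma atom:
  assumes b: "\<beta> > 0" and \<nu>: "\<nu> \<in> prob_measures_R" and G: "Gf \<beta> c C \<nu> \<noteq> top"
  shows "emeasure \<nu> {0} = 0"
proof (rule ccontr)
  assume ne: "emeasure \<nu> {0} \<noteq> 0"
  have ps: "prob_space \<nu>" and sets: "sets \<nu> = sets borel" using \<nu> by (auto simp: prob_measures_R_def)
  interpret prob_space \<nu> by fact
  have z: "{0::real} \<in> sets \<nu>" unfolding sets by simp
  have zz: "{(0::real,0::real)} = {0} \<times> {0}" by simp
  have zs: "{(0::real,0::real)} \<in> sets (\<nu> \<Otimes>\<^sub>M \<nu>)" unfolding zz by (rule pair_measureI[OF z z])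
  have "top * emeasure (\<nu> \<Otimes>\<^sub>M \<nu>) {(0,0)} = (\<integral>\<^sup>+p. top * indicator {(0,0)} p \<partial>(\<nu> \<Otimes>\<^sub>M \<nu>))"
    by (rule nn_integral_cmult_indicator[OF zs, symmetric])
  also have "\<dots> \<le> Gf \<beta> c C \<nu>" unfolding Gf_def
  proof (rule nn_integral_mono)
    fix p :: "real \<times> real"
    show "top * indicator {(0,0)} p \<le> e2ennreal (energy_kernel \<beta> c p + ereal C)"
    proof (cases "p = (0,0)")
      case True
      then have "energy_kernel \<beta> c p = \<infinity>" using kernel_inf[OF b, of 0 0 c] by simp
      then show ?thesis by simp
    qed simp
  qed
  finally have le: "top * emeasure (\<nu> \<Otimes>\<^sub>M \<nu>) {(0,0)} \<le> Gf \<beta> c C \<nu>" .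
  have "emeasure (\<nu> \<Otimes>\<^sub>M \<nu>) {(0,0)} = emeasure \<nu> {0} * emeasure \<nu> {0}"
    unfolding zz by (rule emeasure_pair_measure_Times[OF z z])
  then have "emeasure (\<nu> \<Otimes>\<^sub>M \<nu>) {(0,0)} \<noteq> 0" using ne by simp
  then have "top * emeasure (\<nu> \<Otimes>\<^sub>M \<nu>) {(0,0)} = top" by (simp add: ennreal_mult_eq_top_iff)
  then show False using le G by (simp add: top_unique)
qed

lemma mk_lim:
  assumes \<nu>: "\<nu> \<in> prob_measures_R" and z: "emeasure \<nu> {0} = 0"
  shows "(\<lambda>j. measure \<nu> {x. 1/real (Suc j) \<le> \<bar>x\<bar> \<and> \<bar>x\<bar> \<le> real (Suc j)}) \<longlonglongrightarrow> 1"
proof -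
  have ps: "prob_space \<nu>" and sets: "sets \<nu> = sets borel" using \<nu> by (auto simp: prob_measures_R_def)
  interpret prob_space \<nu> by fact
  define A where "A j = {x::real. 1/real (Suc j) \<le> \<bar>x\<bar> \<and> \<bar>x\<bar> \<le> real (Suc j)}" for j
  have rA: "range A \<subseteq> sets \<nu>" unfolding sets A_def using Abor by auto
  have inc: "incseq A"
  proof (rule incseq_SucI)
    fix j
    have "1/real (Suc (Suc j)) \<le> 1/real (Suc j)" by (simp add: frac_le)
    then show "A j \<subseteq> A (Suc j)" unfolding A_def by auto
  qed
  have U: "(\<Union>j. A j) = UNIV - {0}"
  proof (intro equalityI subsetI)
    fix x assume "x \<in> (\<Union>j. A j)"
    then obtain j where "x \<in> A j" by blast
    moreover have "0 < 1/real (Suc j)" by simp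
    ultimately show "x \<in> UNIV - {0}" unfolding A_def by auto
  next
    fix x :: real assume x: "x \<in> UNIV - {0}"
    then have x0: "\<bar>x\<bar> > 0" by simp
    obtain n :: nat where n: "max \<bar>x\<bar> (1/\<bar>x\<bar>) < real n" using reals_Archimedean2 by blast
    have "\<bar>x\<bar> \<le> real (Suc n)" using n by simp
    moreover have "1/real (Suc n) \<le> \<bar>x\<bar>"
    proof -
      have "1/\<bar>x\<bar> \<le> real (Suc n)" using n by simp
      then show ?thesis using x0 by (simp add: field_simps)
    qed
    ultimately show "x \<in> (\<Union>j. A j)" unfolding A_def by blast
  qed
  have "(\<lambda>j. measure \<nu> (A j)) \<longlonglongrightarrow> measure \<nu> (\<Union>j. A j)" by (rule finite_Lim_measure_incseq[OF rA inc])
  moreover have "measure \<nu> (\<Union>j. A j) = 1"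
  proof -
    have "{0} \<in> null_sets \<nu>" using z sets by (simp add: null_sets_def)
    moreover have "UNIV \<in> sets \<nu>" using sets by simp
    ultimately have "measure \<nu> (UNIV - {0}) = measure \<nu> UNIV" by (simp add: measure_Diff_null_set)
    also have "\<dots> = 1" using prob_space sets_eq_imp_space_eq[OF sets] by simp
    finally show ?thesis unfolding U .
  qed
  ultimately show ?thesis unfolding A_def by simp
qed

lemma lower_part:
  assumes b: "\<beta> > 0" and c0: "c \<ge> 0" and lim: "\<delta> \<longlonglongrightarrow> c" and pos: "eventually (\<lambda>n. \<delta> n > 0) sequentially"
    and a: "a < energy_inf \<beta> c"
  shows "eventually (\<lambda>n. a < energy_inf \<beta> (\<delta> n)) sequentially"
proof -
  obtain bb where ab: "a < ereal bb" "ereal bb < energy_inf \<beta> c" using ereal_dense2[OF a] by blast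
  obtain a' where aa: "a < ereal a'" "ereal a' < ereal bb" using ereal_dense2[OF ab(1)] by blast
  have a'b: "a' < bb" using aa by simp
  define Y where "Y = max (Cb \<beta> (c+1)) (Cb \<beta> 0)"
  define lam where "lam n = (if c \<le> \<delta> n then 1 - (\<delta> n - c) else \<delta> n / c)" for n
  have g: "(\<lambda>n. \<bar>\<delta> n - c\<bar> * (1 + 1/c)) \<longlonglongrightarrow> \<bar>c - c\<bar> * (1 + 1/c)"
    by (intro tendsto_intros lim)
  have "(\<lambda>n. lam n - 1) \<longlonglongrightarrow> 0"
  proof (rule Lim_null_comparison[OF _ g[simplified]])
    show "eventually (\<lambda>n. norm (lam n - 1) \<le> \<bar>\<delta> n - c\<bar> * (1 + 1/c)) sequentially"
      using pos
    proof eventually_elim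
      case (elim n)
      have ic: "0 \<le> 1/c" using c0 by simp
      show ?case
      proof (cases "c \<le> \<delta> n")
        case True
        then have "norm (lam n - 1) = \<bar>\<delta> n - c\<bar>" unfolding lam_def by simp
        also have "\<dots> \<le> \<bar>\<delta> n - c\<bar> * (1 + 1/c)" using ic by (simp add: mult_le_cancel_left1)
        finally show ?thesis .
      next
        case False
        then have cpos: "c > 0" using elim by linarith
        have "lam n - 1 = (\<delta> n - c) / c" unfolding lam_def using False cpos by (simp add: field_simps)
        then have "norm (lam n - 1) = \<bar>\<delta> n - c\<bar> * (1/c)" using cpos by simp
        also have "\<dots> \<le> \<bar>\<delta> n - c\<bar> * (1 + 1/c)" by (intro mult_left_mono) auto
        finally show ?thesis .
      qed
    qed
  qed
  then have lam_lim: "lam \<longlonglongrightarrow> 1" by (rule LIM_zero_cancel)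
  have "(\<lambda>n. lam n * bb + (1 - lam n) * (- Y)) \<longlonglongrightarrow> 1 * bb + (1 - 1) * (- Y)"
    by (intro tendsto_intros lam_lim)
  then have ev1: "eventually (\<lambda>n. a' < lam n * bb + (1 - lam n) * (- Y)) sequentially"
    using a'b by (intro order_tendstoD(1)) auto
  have ev2: "eventually (\<lambda>n. \<delta> n < c + 1) sequentially" by (rule order_tendstoD(2)[OF lim]) simp
  have Yc1: "ereal (- Y) \<le> energy_inf \<beta> (c+1)"
    using energy_inf_lower[OF b, of "c+1"] c0 unfolding Y_def by (simp add: order_trans[rotated])
  have Y0: "ereal (- Y) \<le> energy_inf \<beta> 0"
    using energy_inf_lower[OF b, of 0] unfolding Y_def by (simp add: order_trans[rotated])
  show ?thesis using ev1 ev2 pos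
  proof eventually_elim
    case (elim n)
    have key: "ereal (lam n * bb + (1 - lam n) * (- Y)) \<le> energy_inf \<beta> (\<delta> n)"
    proof (cases "c \<le> \<delta> n")
      case True
      have l: "lam n = 1 - (\<delta> n - c)" unfolding lam_def using True by simp
      show ?thesis
        by (rule conc_inf[OF b, of c "c+1" "c+1" "lam n"])
           (use c0 True elim l ab(2) Yc1 in \<open>auto simp: algebra_simps\<close>)
    next
      case False
      then have cpos: "c > 0" using elim by linarith
      have l: "lam n = \<delta> n / c" unfolding lam_def using False by simp
      have l1: "lam n \<le> 1" unfolding l using False cpos by simp
      have l0: "0 \<le> lam n" unfolding l using elim cpos by simp
      have dl: "\<delta> n = lam n * c + (1 - lam n) * 0" unfolding l using cpos by simp
      show ?thesis
        by (rule conc_inf[OF b, of c "c+1" 0 "lam n"])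
           (use c0 l0 l1 dl elim ab(2) Y0 in auto)
    qed
    show ?case using aa(1) elim(1) key by (meson ereal_less_eq(3) le_less_trans less_le_trans order.strict_implies_order)
  qed
qed

lemma upper_part:
  assumes b: "\<beta> > 0" and c0: "c \<ge> 0" and lim: "\<delta> \<longlonglongrightarrow> c" and pos: "eventually (\<lambda>n. \<delta> n \<ge> 0) sequentially"
    and a: "energy_inf \<beta> c < a"
  shows "eventually (\<lambda>n. energy_inf \<beta> (\<delta> n) < a) sequentially"
proof -
  define D where "D = c + 1"
  define C where "C = Cb \<beta> D"
  have cD: "c \<le> D" unfolding D_def by simp
  obtain \<nu> where \<nu>: "\<nu> \<in> prob_measures_R" "energy \<beta> c \<nu> < a"
    using a unfolding energy_inf_def INF_less_iff by blast
  have E: "energy \<beta> c \<nu> = enn2ereal (Gf \<beta> c C \<nu>) - ereal C"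
    unfolding C_def by (rule energy_shift[OF b c0 cD \<nu>(1)])
  have Gt: "Gf \<beta> c C \<nu> \<noteq> top"
  proof
    assume "Gf \<beta> c C \<nu> = top"
    then have "energy \<beta> c \<nu> = \<infinity>" using E by simp
    then show False using \<nu>(2) by simp
  qed
  define g where "g = enn2real (Gf \<beta> c C \<nu>)"
  have Gg: "Gf \<beta> c C \<nu> = ennreal g" unfolding g_def using Gt by (simp add: ennreal_enn2real top.not_eq_extremum)
  have g0: "g \<ge> 0" unfolding g_def by simp
  have "energy \<beta> c \<nu> = ereal (g - C)" unfolding E Gg using g0 by simp
  then obtain bb where bb: "ereal (g - C) < ereal bb" "ereal bb < a" using ereal_dense2 \<nu>(2) by metis
  have gb: "g - C < bb" using bb by simp
  have z: "emeasure \<nu> {0} = 0" by (rule atom[OF b \<nu>(1) Gt])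
  define m where "m j = measure \<nu> {x. 1/real (Suc j) \<le> \<bar>x\<bar> \<and> \<bar>x\<bar> \<le> real (Suc j)}" for j
  have ml: "m \<longlonglongrightarrow> 1" unfolding m_def by (rule mk_lim[OF \<nu>(1) z])
  have "(\<lambda>j. g / (m j)^2 - C) \<longlonglongrightarrow> g / 1^2 - C" by (intro tendsto_intros ml) simp
  then have e1: "eventually (\<lambda>j. g / (m j)^2 - C < bb) sequentially" using gb by (intro order_tendstoD(2)) auto
  have e2: "eventually (\<lambda>j. 0 < m j) sequentially" by (rule order_tendstoD(1)[OF ml]) simp
  obtain j where j: "g / (m j)^2 - C < bb" "0 < m j"
    using eventually_happens'[OF sequentially_bot eventually_conj[OF e1 e2]] by blast
  define k where "k = real (Suc j)"
  define mk where "mk = m j"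
  have k1: "k \<ge> 1" unfolding k_def by simp
  have mkd: "measure \<nu> {x. 1/k \<le> \<bar>x\<bar> \<and> \<bar>x\<bar> \<le> k} = mk" unfolding mk_def m_def k_def ..
  have "(\<lambda>n. g / mk^2 + \<bar>\<delta> n - c\<bar> * (2 * ln k) - C) \<longlonglongrightarrow> g / mk^2 + \<bar>c - c\<bar> * (2 * ln k) - C"
    by (intro tendsto_intros lim)
  then have e3: "eventually (\<lambda>n. g / mk^2 + \<bar>\<delta> n - c\<bar> * (2 * ln k) - C < bb) sequentially"
    using j(1) unfolding mk_def by (intro order_tendstoD(2)) auto
  have e4: "eventually (\<lambda>n. \<delta> n < D) sequentially" unfolding D_def by (rule order_tendstoD(2)[OF lim]) simp
  show ?thesis using e3 e4 pos
  proof eventually_elim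
    case (elim n)
    have "energy_inf \<beta> (\<delta> n) \<le> enn2ereal (Gf \<beta> c C \<nu> * ennreal (1/mk^2) + ennreal (\<bar>\<delta> n - c\<bar> * (2*ln k))) - ereal C"
      unfolding C_def by (rule trunc[OF b c0 cD elim(3) _ \<nu>(1) k1 mkd]) (use elim j(2) mk_def in auto)
    also have "\<dots> = ereal (g / mk^2 + \<bar>\<delta> n - c\<bar> * (2 * ln k) - C)"
    proof -
      have l0: "0 \<le> ln k" using k1 by simp
      define B where "B = \<bar>\<delta> n - c\<bar> * (2*ln k)"
      have B0: "0 \<le> B" unfolding B_def using l0 by simp
      have q0: "0 \<le> 1/mk^2" by simp
      have "Gf \<beta> c C \<nu> * ennreal (1/mk^2) = ennreal (g * (1/mk^2))"
        unfolding Gg by (rule ennreal_mult[symmetric, OF g0 q0])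
      moreover have "ennreal (g * (1/mk^2)) + ennreal B = ennreal (g * (1/mk^2) + B)"
        by (rule ennreal_plus[symmetric]) (use g0 B0 in auto)
      moreover have "enn2ereal (ennreal (g * (1/mk^2) + B)) = ereal (g * (1/mk^2) + B)"
        by (rule enn2ereal_ennreal) (use g0 B0 in auto)
      ultimately have "enn2ereal (Gf \<beta> c C \<nu> * ennreal (1/mk^2) + ennreal B) = ereal (g / mk^2 + B)" by simp
      then show ?thesis unfolding B_def by simp
    qed
    also have "\<dots> < ereal bb" using elim(1) by simp
    also have "\<dots> < a" by (rule bb(2))
    finally show ?case .
  qed
qed

lemma energy_cont:
  assumes b: "\<beta> > 0" and c0: "c \<ge> 0" and lim: "\<delta> \<longlonglongrightarrow> c" and pos: "eventually (\<lambda>n. \<delta> n > 0) sequentially"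
  shows "(\<lambda>n. energy_inf \<beta> (\<delta> n)) \<longlonglongrightarrow> energy_inf \<beta> c"
proof (rule order_tendstoI)
  fix a assume "a < energy_inf \<beta> c"
  then show "eventually (\<lambda>n. a < energy_inf \<beta> (\<delta> n)) sequentially" by (rule lower_part[OF b c0 lim pos])
next
  fix a assume "energy_inf \<beta> c < a"
  moreover have "eventually (\<lambda>n. \<delta> n \<ge> 0) sequentially" using pos by eventually_elim simp
  ultimately show "eventually (\<lambda>n. energy_inf \<beta> (\<delta> n) < a) sequentially"
    using upper_part[OF b c0 lim] by blast
qed

lemma sq_le: "x \<ge> 0 \<Longrightarrow> sqrt (1 + 4*x) \<le> 1 + 2*(x::real)"
proof -
  assume x: "x \<ge> 0"
  have "1 + 4*x \<le> (1 + 2*x)^2" using x by (simp add: power2_eq_square algebra_simps)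
  then have "sqrt (1 + 4*x) \<le> sqrt ((1 + 2*x)^2)" by (rule real_sqrt_le_mono)
  also have "\<dots> = 1 + 2*x" using x by simp
  finally show ?thesis .
qed

lemma edges:
  assumes b: "\<beta> > 0" and d: "\<delta> \<ge> 0"
  shows "0 \<le> a_edge \<beta> \<delta>" "a_edge \<beta> \<delta> \<le> b_edge \<beta> \<delta>"
    "b_edge \<beta> \<delta> \<le> sqrt (\<beta>/2) * sqrt (2 + 4*\<delta>/\<beta>)"
proof -
  define s where "s = sqrt (1 + 4*\<delta>/\<beta>)"
  have x: "\<delta>/\<beta> \<ge> 0" using b d by simp
  have s1: "s \<le> 1 + 2*\<delta>/\<beta>" unfolding s_def using sq_le[OF x] by simp
  have s0: "s \<ge> 0" unfolding s_def using x by simp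
  have i1: "0 \<le> 1 + 2*\<delta>/\<beta> - s" using s1 by simp
  show "0 \<le> a_edge \<beta> \<delta>" unfolding a_edge_def s_def[symmetric] using i1 b by simp
  show "a_edge \<beta> \<delta> \<le> b_edge \<beta> \<delta>" unfolding a_edge_def b_edge_def s_def[symmetric]
    using s0 b by (intro mult_left_mono real_sqrt_le_mono) auto
  show "b_edge \<beta> \<delta> \<le> sqrt (\<beta>/2) * sqrt (2 + 4*\<delta>/\<beta>)" unfolding b_edge_def s_def[symmetric]
    using s1 b by (intro mult_left_mono real_sqrt_le_mono) auto
qed

lemma eqd_alt:
  assumes b: "\<beta> > 0" and d: "\<delta> \<ge> 0"
  shows "eq_density \<beta> \<delta> t = 2 / (pi * \<beta>) * (1 / \<bar>t\<bar>)
     * sqrt (max 0 ((t\<^sup>2 - (a_edge \<beta> \<delta>)\<^sup>2) * ((b_edge \<beta> \<delta>)\<^sup>2 - t\<^sup>2)))"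
proof -
  define a where "a = a_edge \<beta> \<delta>"
  define bb where "bb = b_edge \<beta> \<delta>"
  have a0: "0 \<le> a" and ab: "a \<le> bb" using edges[OF b d] unfolding a_def bb_def by auto
  have mem: "t \<in> supp_S \<beta> \<delta> \<longleftrightarrow> a \<le> \<bar>t\<bar> \<and> \<bar>t\<bar> \<le> bb"
    unfolding supp_S_def a_def[symmetric] bb_def[symmetric] using a0 by auto
  have sq: "a\<^sup>2 \<le> t\<^sup>2 \<longleftrightarrow> a \<le> \<bar>t\<bar>" "t\<^sup>2 \<le> bb\<^sup>2 \<longleftrightarrow> \<bar>t\<bar> \<le> bb"
    using a0 ab by (auto simp: abs_le_square_iff[symmetric] abs_le_iff power2_abs)
  show ?thesis
  proof (cases "t \<in> supp_S \<beta> \<delta>")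
    case True
    then have "a\<^sup>2 \<le> t\<^sup>2" "t\<^sup>2 \<le> bb\<^sup>2" using mem sq by auto
    then have "0 \<le> (t\<^sup>2 - a\<^sup>2) * (bb\<^sup>2 - t\<^sup>2)" by simp
    then show ?thesis using True unfolding eq_density_def a_def[symmetric] bb_def[symmetric] by simp
  next
    case False
    have a2b2: "a\<^sup>2 \<le> bb\<^sup>2" using a0 ab by (simp add: power_mono)
    have "(t\<^sup>2 - a\<^sup>2) * (bb\<^sup>2 - t\<^sup>2) \<le> 0"
    proof (cases "a \<le> \<bar>t\<bar>")
      case True
      then have "\<not> t\<^sup>2 \<le> bb\<^sup>2" using False mem sq by auto
      then show ?thesis using True sq by (simp add: mult_nonneg_nonpos)
    next
      case False
      then have "t\<^sup>2 < a\<^sup>2" using sq by auto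
      then show ?thesis using a2b2 by (simp add: mult_nonpos_nonneg)
    qed
    then show ?thesis using False unfolding eq_density_def a_def[symmetric] bb_def[symmetric] by simp
  qed
qed

lemma dens_bound:
  fixes a b R t :: real
  assumes "0 \<le> a" "a \<le> b" "b \<le> R"
  shows "(1 / \<bar>t\<bar>) * sqrt (max 0 ((t\<^sup>2 - a\<^sup>2) * (b\<^sup>2 - t\<^sup>2))) \<le> R * indicator {-R..R} t"
proof (cases "t = 0")
  case True then show ?thesis using assms by (simp add: indicator_def)
next
  case t0: False
  show ?thesis
  proof (cases "\<bar>t\<bar> \<le> b")
    case False
    then have "b\<^sup>2 < t\<^sup>2" using assms by (metis abs_le_square_iff abs_of_nonneg linorder_not_le order.trans)
    moreover have "a\<^sup>2 \<le> b\<^sup>2" using assms by (simp add: power_mono)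
    ultimately have "(t\<^sup>2 - a\<^sup>2) * (b\<^sup>2 - t\<^sup>2) \<le> 0" by (simp add: mult_nonneg_nonpos)
    then show ?thesis using assms by (simp add: indicator_def)
  next
    case True
    then have ind: "indicator {-R..R} t = (1::real)" using assms by (auto simp: indicator_def)
    have "max 0 ((t\<^sup>2 - a\<^sup>2) * (b\<^sup>2 - t\<^sup>2)) \<le> t\<^sup>2 * b\<^sup>2"
    proof (cases "(t\<^sup>2 - a\<^sup>2) * (b\<^sup>2 - t\<^sup>2) \<le> 0")
      case True then show ?thesis by simp
    next
      case False
      have tb: "t\<^sup>2 \<le> b\<^sup>2" using True by (metis abs_le_square_iff abs_of_nonneg assms(1,2) order.trans)
      then have "0 < t\<^sup>2 - a\<^sup>2" using False
        by (smt (verit, best) mult_nonpos_nonneg)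
      then have "(t\<^sup>2 - a\<^sup>2) * (b\<^sup>2 - t\<^sup>2) \<le> t\<^sup>2 * b\<^sup>2"
        using tb by (intro mult_mono) (auto simp: zero_le_power2)
      then show ?thesis by simp
    qed
    then have "sqrt (max 0 ((t\<^sup>2 - a\<^sup>2) * (b\<^sup>2 - t\<^sup>2))) \<le> sqrt (t\<^sup>2 * b\<^sup>2)" by (rule real_sqrt_le_mono)
    also have "\<dots> = \<bar>t\<bar> * b" using assms by (simp add: real_sqrt_mult)
    finally have "(1 / \<bar>t\<bar>) * sqrt (max 0 ((t\<^sup>2 - a\<^sup>2) * (b\<^sup>2 - t\<^sup>2))) \<le> (1/\<bar>t\<bar>) * (\<bar>t\<bar> * b)"
      by (intro mult_left_mono) auto
    also have "\<dots> = b" using t0 by simp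
    finally show ?thesis using ind assms by simp
  qed
qed

lemma eqd_meas: "eq_density \<beta> \<delta> \<in> borel_measurable borel"
  unfolding eq_density_def supp_S_def by measurable

lemma weak_part:
  assumes b: "\<beta> > 0" and lim: "\<alpha> \<longlonglongrightarrow> c" and nn: "\<And>n. \<alpha> n \<ge> 0" and c0: "c \<ge> 0"
  shows "weak_conv_bc (\<lambda>n. nu_eq \<beta> (\<alpha> n)) (nu_eq \<beta> c)"
  unfolding weak_conv_bc_def
proof (intro allI impI)
  fix f :: "real \<Rightarrow> real" assume "continuous_on UNIV f \<and> bounded (range f)"
  then have fc: "continuous_on UNIV f" and fb: "bounded (range f)" by auto
  obtain Mf where Mf: "\<And>t. \<bar>f t\<bar> \<le> Mf" using fb unfolding bounded_iff by auto
  have fm: "f \<in> borel_measurable borel" by (rule borel_measurable_continuous_onI[OF fc])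
  obtain K where K: "\<And>n. norm (\<alpha> n) \<le> K"
    using convergent_imp_Bseq[of \<alpha>] lim by (metis BseqE convergentI)
  define M where "M = max K c"
  have aM: "\<alpha> n \<le> M" for n using K[of n] unfolding M_def by auto
  have cM: "c \<le> M" unfolding M_def by simp
  define R where "R = sqrt (\<beta>/2) * sqrt (2 + 4*M/\<beta>)"
  have bR: "b_edge \<beta> \<delta> \<le> R" if "0 \<le> \<delta>" "\<delta> \<le> M" for \<delta>
  proof -
    have "b_edge \<beta> \<delta> \<le> sqrt (\<beta>/2) * sqrt (2 + 4*\<delta>/\<beta>)" by (rule edges(3)[OF b that(1)])
    also have "\<dots> \<le> R" unfolding R_def using that b
      by (intro mult_left_mono real_sqrt_le_mono) (auto simp: divide_right_mono)
    finally show ?thesis .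
  qed
  define dn where "dn \<delta> t = 2 / (pi * \<beta>) * (1 / \<bar>t\<bar>)
     * sqrt (max 0 ((t\<^sup>2 - (a_edge \<beta> \<delta>)\<^sup>2) * ((b_edge \<beta> \<delta>)\<^sup>2 - t\<^sup>2)))" for \<delta> t
  have alt: "eq_density \<beta> \<delta> t = dn \<delta> t" if "\<delta> \<ge> 0" for \<delta> t unfolding dn_def by (rule eqd_alt[OF b that])
  have dn0: "0 \<le> dn \<delta> t" for \<delta> t unfolding dn_def using b by simp
  have dnb: "dn \<delta> t \<le> 2 / (pi * \<beta>) * (R * indicator {-R..R} t)" if "0 \<le> \<delta>" "\<delta> \<le> M" for \<delta> t
  proof -
    have "(1 / \<bar>t\<bar>) * sqrt (max 0 ((t\<^sup>2 - (a_edge \<beta> \<delta>)\<^sup>2) * ((b_edge \<beta> \<delta>)\<^sup>2 - t\<^sup>2))) \<le> R * indicator {-R..R} t"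
      by (rule dens_bound) (use edges[OF b that(1)] bR[OF that] in auto)
    then have "2 / (pi * \<beta>) * ((1 / \<bar>t\<bar>) * sqrt (max 0 ((t\<^sup>2 - (a_edge \<beta> \<delta>)\<^sup>2) * ((b_edge \<beta> \<delta>)\<^sup>2 - t\<^sup>2))))
        \<le> 2 / (pi * \<beta>) * (R * indicator {-R..R} t)"
      by (rule mult_left_mono) (use b in simp)
    then show ?thesis unfolding dn_def by (simp only: mult.assoc)
  qed
  have intd: "integral\<^sup>L (nu_eq \<beta> \<delta>) f = (\<integral>t. eq_density \<beta> \<delta> t *\<^sub>R f t \<partial>lborel)" if "\<delta> \<ge> 0" for \<delta>
    unfolding nu_eq_def
  proof (rule integral_density)
    show "f \<in> borel_measurable lborel" using fm by simp
    show "eq_density \<beta> \<delta> \<in> borel_measurable lborel" using eqd_meas by simp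
    show "AE x in lborel. 0 \<le> eq_density \<beta> \<delta> x" using alt[OF that] dn0 by simp
  qed
  have "(\<lambda>n. (\<integral>t. eq_density \<beta> (\<alpha> n) t *\<^sub>R f t \<partial>lborel)) \<longlonglongrightarrow> (\<integral>t. eq_density \<beta> c t *\<^sub>R f t \<partial>lborel)"
  proof (rule integral_dominated_convergence[where w = "\<lambda>t. Mf * (2 / (pi * \<beta>) * (R * indicator {-R..R} t))"])
    show "(\<lambda>t. eq_density \<beta> c t *\<^sub>R f t) \<in> borel_measurable lborel" using eqd_meas fm by simp
    show "(\<lambda>t. eq_density \<beta> (\<alpha> n) t *\<^sub>R f t) \<in> borel_measurable lborel" for n using eqd_meas fm by simp
    show "integrable lborel (\<lambda>t. Mf * (2 / (pi * \<beta>) * (R * indicator {-R..R} t)))"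
      by (intro integrable_mult_right integrable_real_indicator) (auto simp: emeasure_lborel_Icc_eq)
    show "AE t in lborel. (\<lambda>n. eq_density \<beta> (\<alpha> n) t *\<^sub>R f t) \<longlonglongrightarrow> eq_density \<beta> c t *\<^sub>R f t"
    proof (rule AE_I2)
      fix t
      have la: "(\<lambda>n. a_edge \<beta> (\<alpha> n)) \<longlonglongrightarrow> a_edge \<beta> c" unfolding a_edge_def using b by (intro tendsto_intros lim) auto
      have lb: "(\<lambda>n. b_edge \<beta> (\<alpha> n)) \<longlonglongrightarrow> b_edge \<beta> c" unfolding b_edge_def using b by (intro tendsto_intros lim) auto
      have "(\<lambda>n. dn (\<alpha> n) t * f t) \<longlonglongrightarrow> dn c t * f t" unfolding dn_def by (intro tendsto_intros la lb)
      then show "(\<lambda>n. eq_density \<beta> (\<alpha> n) t *\<^sub>R f t) \<longlonglongrightarrow> eq_density \<beta> c t *\<^sub>R f t"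
        using alt[OF nn] alt[OF c0] by simp
    qed
    show "AE t in lborel. norm (eq_density \<beta> (\<alpha> n) t *\<^sub>R f t) \<le> Mf * (2 / (pi * \<beta>) * (R * indicator {-R..R} t))" for n
    proof (rule AE_I2)
      fix t
      have "norm (eq_density \<beta> (\<alpha> n) t *\<^sub>R f t) = dn (\<alpha> n) t * \<bar>f t\<bar>" using alt[OF nn] dn0 by (simp add: abs_mult)
      also have "\<dots> \<le> 2 / (pi * \<beta>) * (R * indicator {-R..R} t) * Mf"
        using dnb[OF nn aM] Mf dn0 by (intro mult_mono) (auto intro: order_trans[OF dn0])
      finally show "norm (eq_density \<beta> (\<alpha> n) t *\<^sub>R f t) \<le> Mf * (2 / (pi * \<beta>) * (R * indicator {-R..R} t))"
        by (simp add: mult.commute)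
    qed
  qed
  then show "(\<lambda>n. integral\<^sup>L (nu_eq \<beta> (\<alpha> n)) f) \<longlonglongrightarrow> integral\<^sup>L (nu_eq \<beta> c) f"
    using intd[OF nn] intd[OF c0] by simp
qed

theorem lemma4p5:
  fixes \<beta> c :: real and \<mu> \<alpha> :: "nat \<Rightarrow> real"
  assumes "\<beta> > 0"
    and "\<forall>n\<ge>1. \<mu> n > 0"
    and "(\<lambda>n. \<mu> n / real n) \<longlonglongrightarrow> c"
    and "\<alpha> = (\<lambda>n. \<mu> n / real n)"
  shows "weak_conv_bc (\<lambda>n. nu_eq \<beta> (\<alpha> n)) (nu_eq \<beta> c)
    \<and> (\<lambda>n. energy_inf \<beta> (\<alpha> n)) \<longlonglongrightarrow> energy_inf \<beta> c"
proof -
  have lim: "\<alpha> \<longlonglongrightarrow> c" using assms(3,4) by simp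
  have nn: "\<alpha> n \<ge> 0" for n
  proof (cases "n = 0")
    case True then show ?thesis using assms(4) by simp
  next
    case False
    then have "\<mu> n > 0" using assms(2) by simp
    then show ?thesis using assms(4) by simp
  qed
  have c0: "c \<ge> 0" by (rule LIMSEQ_le_const[OF lim]) (use nn in auto)
  have pos: "eventually (\<lambda>n. \<alpha> n > 0) sequentially"
    unfolding eventually_sequentially
  proof (intro exI allI impI)
    fix n :: nat assume "1 \<le> n"
    then have "\<mu> n > 0" "real n > 0" using assms(2) by auto
    then show "\<alpha> n > 0" using assms(4) by simp
  qed
  show ?thesis using weak_part[OF assms(1) lim nn c0] energy_cont[OF assms(1) c0 lim pos] by simp
qed

end
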